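(* Assume (A1), (A2), (A3), and that for each class $c\in[C]$ the revision protocol $\rho^c$ is imitative via comparison, excess payoff, or pairwise comparison. If $\mu\in X$ is a mixed stationary Nash equilibrium, then $\mu$ is a rest point of the master equation, i.e., $f^{c,d}_{s,u}(\mu)+f^{c,r}_{s,u}(\mu)=0$ for all $c\in[C]$, $s\in\mathcal S^c$, $u\in\mathcal U^c_D$.
   Context: Model: classes $c\in[C]$ with masses $m^c>0$, finite state sets $\mathcal S^c$, nonempty finite admissible action sets $\mathcal A^c(s)$ ($\mathcal A^c=\bigcup_s\mathcal A^c(s)$), transition kernels $\phi^c(\cdot\mid s,a)\in\mathcal P(\mathcal S^c)$, action rates $\lambda^c>0$; $p=\sum_c|\mathcal S^c|,q=\sum_c|\mathcal A^c|$. $\mathcal U^c_D$ = deterministic policies ($s\mapsto u(s)\in\mathcal A^c(s)$; $u(a\mid s)=\mathbf 1[a=u(s)]$), $n^c=|\mathcal U^c_D|$. $\phi^{c,u}_{ss'}=\phi^c(s\mid s',u(s'))$. (A2): for all $c,u\in\mathcal U^c_D$, $\phi^{c,u}$ has exactly one recurrent communicating class; $\eta^{c,u}$ is the unique stationary distribution of the continuous-time chain with generator $\lambda^c(\phi^{c,u}-I)$. $X=\prod_c\{\mu^c\in\mathbb R_{\ge0}^{\mathcal S^c\times\mathcal U^c_D}:\sum\mu^c=m^c\}$, $X_{\mathcal S\times\mathcal A}=\prod_c\{\nu\in\mathbb R_{\ge0}^{\mathcal S^c\times\mathcal A^c}:\sum\nu=m^c\}$, $X^c_{\mathcal U_D}=\{\sigma\in\mathbb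 R^{n^c}_{\ge0}:\sum\sigma=m^c\}$; $\mu^c_{\mathcal S\times\mathcal A}[s,a]=\sum_u\mu^c[s,u]u(a\mid s)$; $\mu^c[\mathcal S^c,u]=\sum_s\mu^c[s,u]$, $\mu^c[\mathcal S^c,\cdot]=(\mu^c[\mathcal S^c,u])_u$. Rewards $r^c:\mathcal S^c\times\mathcal A^c\times X_{\mathcal S\times\mathcal A}\to\mathbb R$; (A1): each $r^c(s,a,\cdot)$ extends to $\mathbb R^{pq}_{\ge0}$ with an extension continuously differentiable on $X_{\mathcal S\times\mathcal A}$. $F^c_u(\mu)=\sum_{s}\sum_{a\in\mathcal A^c(s)}\eta^{c,u}(s)u(a\mid s)r^c(s,a,\mu_{\mathcal S\times\mathcal A})$, $F^c(\mu)=(F^c_u(\mu))_u$. MSNE: $\mu\in X$ with, for all $c,u$: (i) $\mu^c[\mathcal S^c,u]>0\Rightarrow F^c_u(\mu)\ge F^c_v(\mu)\ \forall v\in\mathcal U^c_D$; (ii) $\mu^c[s,u]=\eta^{c,u}(s)\mu^c[\mathcal S^c,u]$ for all $s$. Revision protocol of class $c$: $\rho^c:\mathbb R^{n^c}\times X^c_{\mathcal U_D}\to\mathbb R^{n^c\times n^c}_{\ge0}$ with revision rate $R^c>0$; (A3): $\rho^c$ Lipschitz and $R^c\ge\sup_{\mu\in X}\sum_{v\ne u}\rho^c_{uv}(F^c(\mu),\mu^c[\mathcal S^c,\cdot])$ for all $u$. Classes: imitative: $\rho^c_{uv}(F,\sigma)=r^c_{uv}(F,\sigma)\sigma_v/m^c$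 with $r^c$ Lipschitz, nonnegative, and $F_v\ge F_u\iff r^c_{kv}-r^c_{vk}\ge r^c_{ku}-r^c_{uk}$ for all $F,\sigma,u,v,k$; imitative via comparison: imitative with additionally $\mathrm{sign}(r^c_{uv}(F,\sigma))=\mathrm{sign}(\max(0,F_v-F_u))$; excess payoff: $\rho^c_{uv}(F,\sigma)=\tau^c_v(\hat F)$ with $\hat F=F-\mathbf 1F^\top\sigma/m^c$ and $\tau^c:\mathbb R^{n^c}\to\mathbb R^{n^c}_{\ge0}$ Lipschitz with $\hat F\notin\mathbb R^{n^c}_{\le0}\Rightarrow\tau^c(\hat F)^\top\hat F>0$; pairwise comparison: $\rho^c_{uv}(F,\sigma)=\tau^c_{uv}(F)$ with $\tau^c$ Lipschitz, nonnegative and $\mathrm{sign}(\tau^c_{uv}(F))=\mathrm{sign}(\max(0,F_v-F_u))$. Master equation vector fields: $f^{c,d}_{s,u}(\mu)=\lambda^c\sum_{s'}\sum_{a'\in\mathcal A^c(s')}\phi^c(s\mid s',a')u(a'\mid s')\mu^c[s',u]-\lambda^c\mu^c[s,u]$; $f^{c,r}_{s,u}(\mu)=\sum_{u'}\mu^c[s,u']\rho^c_{u'u}(F^c(\mu),\mu^c[\mathcal S^c,\cdot])-\mu^c[s,u]\sum_{u'}\rho^c_{uu'}(F^c(\mu),\mu^c[\mathcal S^c,\cdot])$. *)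

theory Defs
  imports "HOL-Analysis.Analysis"
begin

(* Conventions:
   - classes form a finite type 'c (so [C] = UNIV);
   - all states form a finite type 's; cls s is the class of state s, S^c = {s. cls s = c};
   - all actions form a finite type 'a; A s is the admissible action set of state s;
   - phi s a s' = phi^{cls s}(s' | s, a);  lam c = lambda^c;  m c = m^c;
   - a deterministic policy of class c is an extensional function u : 's => 'a
     in PiE (S^c) A;
   - a mean field mu in X is represented as mu s u = mu^{cls s}[s,u]. *)

definition St :: "('s \<Rightarrow> 'c) \<Rightarrow> 'c \<Rightarrow> 's set" where
  "St cls c = {s. cls s = c}"

definition Aall :: "('s \<Rightarrow> 'c) \<Rightarrow> ('s \<Rightarrow> 'a set) \<Rightarrow> 'c \<Rightarrow> 'a set" where
  "Aall cls A c = (\<Union>s\<in>St cls c. A s)"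

definition UD :: "('s \<Rightarrow> 'c) \<Rightarrow> ('s \<Rightarrow> 'a set) \<Rightarrow> 'c \<Rightarrow> ('s \<Rightarrow> 'a) set" where
  "UD cls A c = PiE (St cls c) A"

definition upol :: "('s \<Rightarrow> 'a) \<Rightarrow> 'a \<Rightarrow> 's \<Rightarrow> real" where
  "upol u a s = (if a = u s then 1 else 0)"

definition model_ok ::
  "('s \<Rightarrow> 'c) \<Rightarrow> ('s \<Rightarrow> 'a set) \<Rightarrow> ('s \<Rightarrow> 'a \<Rightarrow> 's \<Rightarrow> real) \<Rightarrow> ('c \<Rightarrow> real) \<Rightarrow> ('c \<Rightarrow> real) \<Rightarrow> bool" where
  "model_ok cls A phi lam m \<longleftrightarrow>
     (\<forall>c. m c > 0 \<and> lam c > 0) \<and>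
     (\<forall>s. A s \<noteq> {} \<and> finite (A s)) \<and>
     (\<forall>s. \<forall>a\<in>Aall cls A (cls s).
        (\<forall>s'. phi s a s' \<ge> 0) \<and> (\<forall>s'. cls s' \<noteq> cls s \<longrightarrow> phi s a s' = 0) \<and>
        (\<Sum>s'\<in>St cls (cls s). phi s a s') = 1)"

definition Xset :: "('s \<Rightarrow> 'c) \<Rightarrow> ('s \<Rightarrow> 'a set) \<Rightarrow> ('c \<Rightarrow> real) \<Rightarrow> ('s \<Rightarrow> ('s \<Rightarrow> 'a) \<Rightarrow> real) set" where
  "Xset cls A m = {mu. \<forall>c. (\<forall>s\<in>St cls c. \<forall>u\<in>UD cls A c. mu s u \<ge> 0) \<and>
       (\<Sum>s\<in>St cls c. \<Sum>u\<in>UD cls A c. mu s u) = m c}"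

definition muSA :: "('s::finite \<Rightarrow> 'c) \<Rightarrow> ('s \<Rightarrow> 'a::finite set) \<Rightarrow> ('s \<Rightarrow> ('s \<Rightarrow> 'a) \<Rightarrow> real) \<Rightarrow> real ^ ('s \<times> 'a)" where
  "muSA cls A mu = (\<chi> i. \<Sum>u\<in>UD cls A (cls (fst i)). mu (fst i) u * upol u (snd i) (fst i))"

definition XSA :: "('s::finite \<Rightarrow> 'c) \<Rightarrow> ('s \<Rightarrow> 'a::finite set) \<Rightarrow> ('c \<Rightarrow> real) \<Rightarrow> (real ^ ('s \<times> 'a)) set" where
  "XSA cls A m = {nu. (\<forall>i. nu $ i \<ge> 0) \<and>
      (\<forall>s a. a \<notin> Aall cls A (cls s) \<longrightarrow> nu $ (s, a) = 0) \<and>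
      (\<forall>c. (\<Sum>s\<in>St cls c. \<Sum>a\<in>Aall cls A c. nu $ (s, a)) = m c)}"

definition orthant :: "(real ^ 'i) set" where
  "orthant = {nu. \<forall>i. nu $ i \<ge> 0}"

definition A1 :: "('s::finite \<Rightarrow> 'c) \<Rightarrow> ('s \<Rightarrow> 'a::finite set) \<Rightarrow> ('c \<Rightarrow> real) \<Rightarrow>
    ('s \<Rightarrow> 'a \<Rightarrow> real ^ ('s \<times> 'a) \<Rightarrow> real) \<Rightarrow> bool" where
  "A1 cls A m r \<longleftrightarrow> (\<forall>s. \<forall>a\<in>Aall cls A (cls s).
     \<exists>g g'. (\<forall>nu\<in>XSA cls A m. g nu = r s a nu) \<and>
       (\<forall>nu\<in>XSA cls A m. (g has_derivative blinfun_apply (g' nu)) (at nu within orthant)) \<and>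
       continuous_on (XSA cls A m) g')"

definition step :: "('s \<Rightarrow> 'c) \<Rightarrow> ('s \<Rightarrow> 'a \<Rightarrow> 's \<Rightarrow> real) \<Rightarrow> 'c \<Rightarrow> ('s \<Rightarrow> 'a) \<Rightarrow> 's \<Rightarrow> 's \<Rightarrow> bool" where
  "step cls phi c u s t \<longleftrightarrow> s \<in> St cls c \<and> t \<in> St cls c \<and> phi s (u s) t > 0"

definition comm_class :: "('s \<Rightarrow> 'c) \<Rightarrow> ('s \<Rightarrow> 'a \<Rightarrow> 's \<Rightarrow> real) \<Rightarrow> 'c \<Rightarrow> ('s \<Rightarrow> 'a) \<Rightarrow> 's set \<Rightarrow> bool" where
  "comm_class cls phi c u K \<longleftrightarrow> (\<exists>s\<in>St cls c. K = {t\<in>St cls c.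
      (step cls phi c u)\<^sup>*\<^sup>* s t \<and> (step cls phi c u)\<^sup>*\<^sup>* t s})"

text \<open>For a finite chain a communicating class is recurrent iff it is closed.\<close>
definition recurrent_class :: "('s \<Rightarrow> 'c) \<Rightarrow> ('s \<Rightarrow> 'a \<Rightarrow> 's \<Rightarrow> real) \<Rightarrow> 'c \<Rightarrow> ('s \<Rightarrow> 'a) \<Rightarrow> 's set \<Rightarrow> bool" where
  "recurrent_class cls phi c u K \<longleftrightarrow> comm_class cls phi c u K \<and>
     (\<forall>s\<in>K. \<forall>t. step cls phi c u s t \<longrightarrow> t \<in> K)"

text \<open>Generator lambda^c (phi^{c,u} - I), with phi^{c,u}_{s s'} = phi^c(s | s', u(s')).\<close>
definition gen :: "('s \<Rightarrow> 'a \<Rightarrow> 's \<Rightarrow> real) \<Rightarrow> ('c \<Rightarrow> real) \<Rightarrow> 'c \<Rightarrow> ('s \<Rightarrow> 'a) \<Rightarrow> 's \<Rightarrow> 's \<Rightarrow> real" where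
  "gen phi lam c u s s' = lam c * (phi s' (u s') s - (if s = s' then 1 else 0))"

definition stationary :: "('s \<Rightarrow> 'c) \<Rightarrow> ('s \<Rightarrow> 'a \<Rightarrow> 's \<Rightarrow> real) \<Rightarrow> ('c \<Rightarrow> real) \<Rightarrow> 'c \<Rightarrow> ('s \<Rightarrow> 'a) \<Rightarrow> ('s \<Rightarrow> real) \<Rightarrow> bool" where
  "stationary cls phi lam c u eta \<longleftrightarrow>
     (\<forall>s. eta s \<ge> 0) \<and> (\<forall>s. s \<notin> St cls c \<longrightarrow> eta s = 0) \<and>
     (\<Sum>s\<in>St cls c. eta s) = 1 \<and>
     (\<forall>s\<in>St cls c. (\<Sum>s'\<in>St cls c. gen phi lam c u s s' * eta s') = 0)"

definition A2 :: "('s \<Rightarrow> 'c) \<Rightarrow> ('s \<Rightarrow> 'a set) \<Rightarrow> ('s \<Rightarrow> 'a \<Rightarrow> 's \<Rightarrow> real) \<Rightarrow> ('c \<Rightarrow> real) \<Rightarrow> bool" where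
  "A2 cls A phi lam \<longleftrightarrow> (\<forall>c. \<forall>u\<in>UD cls A c.
     (\<exists>!K. recurrent_class cls phi c u K) \<and> (\<exists>!eta. stationary cls phi lam c u eta))"

definition eta :: "('s \<Rightarrow> 'c) \<Rightarrow> ('s \<Rightarrow> 'a \<Rightarrow> 's \<Rightarrow> real) \<Rightarrow> ('c \<Rightarrow> real) \<Rightarrow> 'c \<Rightarrow> ('s \<Rightarrow> 'a) \<Rightarrow> 's \<Rightarrow> real" where
  "eta cls phi lam c u = (THE e. stationary cls phi lam c u e)"

definition Fpay :: "('s::finite \<Rightarrow> 'c) \<Rightarrow> ('s \<Rightarrow> 'a::finite set) \<Rightarrow> ('s \<Rightarrow> 'a \<Rightarrow> 's \<Rightarrow> real) \<Rightarrow> ('c \<Rightarrow> real) \<Rightarrow>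
    ('s \<Rightarrow> 'a \<Rightarrow> real ^ ('s \<times> 'a) \<Rightarrow> real) \<Rightarrow> 'c \<Rightarrow> ('s \<Rightarrow> ('s \<Rightarrow> 'a) \<Rightarrow> real) \<Rightarrow> ('s \<Rightarrow> 'a) \<Rightarrow> real" where
  "Fpay cls A phi lam r c mu u = (\<Sum>s\<in>St cls c. \<Sum>a\<in>A s.
       eta cls phi lam c u s * upol u a s * r s a (muSA cls A mu))"

definition polmass :: "('s \<Rightarrow> 'c) \<Rightarrow> 'c \<Rightarrow> ('s \<Rightarrow> ('s \<Rightarrow> 'a) \<Rightarrow> real) \<Rightarrow> ('s \<Rightarrow> 'a) \<Rightarrow> real" where
  "polmass cls c mu u = (\<Sum>s\<in>St cls c. mu s u)"

definition XU :: "('s \<Rightarrow> 'c) \<Rightarrow> ('s \<Rightarrow> 'a set) \<Rightarrow> ('c \<Rightarrow> real) \<Rightarrow> 'c \<Rightarrow> (('s \<Rightarrow> 'a) \<Rightarrow> real) set" where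
  "XU cls A m c = {sig. (\<forall>u\<in>UD cls A c. sig u \<ge> 0) \<and> (\<Sum>u\<in>UD cls A c. sig u) = m c}"

text \<open>Revision protocols rho c F sigma u v = rho^c_{uv}(F, sigma); vectors in R^{n^c} are
  represented as functions on policies, only their values on U^c_D being relevant.
  Lipschitz continuity is w.r.t. the l1 norm (all norms on R^n are equivalent).\<close>
definition lipschitz_prot :: "('b set) \<Rightarrow> (('b \<Rightarrow> real) set) \<Rightarrow>
    (('b \<Rightarrow> real) \<Rightarrow> ('b \<Rightarrow> real) \<Rightarrow> 'b \<Rightarrow> 'b \<Rightarrow> real) \<Rightarrow> bool" where
  "lipschitz_prot U XS g \<longleftrightarrow> (\<exists>L. \<forall>F F' sig sig'. sig \<in> XS \<longrightarrow> sig' \<in> XS \<longrightarrow>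
     (\<forall>u\<in>U. \<forall>v\<in>U. \<bar>g F sig u v - g F' sig' u v\<bar> \<le>
        L * ((\<Sum>w\<in>U. \<bar>F w - F' w\<bar>) + (\<Sum>w\<in>U. \<bar>sig w - sig' w\<bar>))))"

definition imitative_via_comparison :: "'b set \<Rightarrow> (('b \<Rightarrow> real) set) \<Rightarrow> real \<Rightarrow>
    (('b \<Rightarrow> real) \<Rightarrow> ('b \<Rightarrow> real) \<Rightarrow> 'b \<Rightarrow> 'b \<Rightarrow> real) \<Rightarrow> bool" where
  "imitative_via_comparison U XS mc rho \<longleftrightarrow> (\<exists>rr. lipschitz_prot U XS rr \<and>
     (\<forall>F sig. sig \<in> XS \<longrightarrow> (\<forall>u\<in>U. \<forall>v\<in>U.
        rr F sig u v \<ge> 0 \<and> rho F sig u v = rr F sig u v * sig v / mc \<and>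
        sgn (rr F sig u v) = sgn (max 0 (F v - F u)) \<and>
        (\<forall>k\<in>U. F v \<ge> F u \<longleftrightarrow> rr F sig k v - rr F sig v k \<ge> rr F sig k u - rr F sig u k))))"

definition excess_payoff :: "'b set \<Rightarrow> (('b \<Rightarrow> real) set) \<Rightarrow> real \<Rightarrow>
    (('b \<Rightarrow> real) \<Rightarrow> ('b \<Rightarrow> real) \<Rightarrow> 'b \<Rightarrow> 'b \<Rightarrow> real) \<Rightarrow> bool" where
  "excess_payoff U XS mc rho \<longleftrightarrow> (\<exists>tau :: ('b \<Rightarrow> real) \<Rightarrow> 'b \<Rightarrow> real.
     (\<exists>L. \<forall>G G'. \<forall>v\<in>U. \<bar>tau G v - tau G' v\<bar> \<le> L * (\<Sum>w\<in>U. \<bar>G w - G' w\<bar>)) \<and>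
     (\<forall>G. \<forall>v\<in>U. tau G v \<ge> 0) \<and>
     (\<forall>G. (\<exists>w\<in>U. G w > 0) \<longrightarrow> (\<Sum>w\<in>U. tau G w * G w) > 0) \<and>
     (\<forall>F sig. sig \<in> XS \<longrightarrow> (\<forall>u\<in>U. \<forall>v\<in>U.
        rho F sig u v = tau (\<lambda>w. F w - (\<Sum>w'\<in>U. F w' * sig w') / mc) v)))"

definition pairwise_comparison :: "'b set \<Rightarrow> (('b \<Rightarrow> real) set) \<Rightarrow>
    (('b \<Rightarrow> real) \<Rightarrow> ('b \<Rightarrow> real) \<Rightarrow> 'b \<Rightarrow> 'b \<Rightarrow> real) \<Rightarrow> bool" where
  "pairwise_comparison U XS rho \<longleftrightarrow> (\<exists>tau :: ('b \<Rightarrow> real) \<Rightarrow> 'b \<Rightarrow> 'b \<Rightarrow> real.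
     (\<exists>L. \<forall>G G'. \<forall>u\<in>U. \<forall>v\<in>U. \<bar>tau G u v - tau G' u v\<bar> \<le> L * (\<Sum>w\<in>U. \<bar>G w - G' w\<bar>)) \<and>
     (\<forall>G. \<forall>u\<in>U. \<forall>v\<in>U. tau G u v \<ge> 0 \<and> sgn (tau G u v) = sgn (max 0 (G v - G u))) \<and>
     (\<forall>F sig. sig \<in> XS \<longrightarrow> (\<forall>u\<in>U. \<forall>v\<in>U. rho F sig u v = tau F u v)))"

definition A3 :: "('s::finite \<Rightarrow> 'c) \<Rightarrow> ('s \<Rightarrow> 'a::finite set) \<Rightarrow> ('s \<Rightarrow> 'a \<Rightarrow> 's \<Rightarrow> real) \<Rightarrow> ('c \<Rightarrow> real) \<Rightarrow>
    ('c \<Rightarrow> real) \<Rightarrow> ('s \<Rightarrow> 'a \<Rightarrow> real ^ ('s \<times> 'a) \<Rightarrow> real) \<Rightarrow>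
    ('c \<Rightarrow> (('s \<Rightarrow> 'a) \<Rightarrow> real) \<Rightarrow> (('s \<Rightarrow> 'a) \<Rightarrow> real) \<Rightarrow> ('s \<Rightarrow> 'a) \<Rightarrow> ('s \<Rightarrow> 'a) \<Rightarrow> real) \<Rightarrow>
    ('c \<Rightarrow> real) \<Rightarrow> bool" where
  "A3 cls A phi lam m r rho R \<longleftrightarrow> (\<forall>c.
     R c > 0 \<and>
     (\<forall>F sig. sig \<in> XU cls A m c \<longrightarrow> (\<forall>u\<in>UD cls A c. \<forall>v\<in>UD cls A c. rho c F sig u v \<ge> 0)) \<and>
     lipschitz_prot (UD cls A c) (XU cls A m c) (rho c) \<and>
     (\<forall>mu\<in>Xset cls A m. \<forall>u\<in>UD cls A c.
        (\<Sum>v\<in>UD cls A c - {u}. rho c (Fpay cls A phi lam r c mu) (polmass cls c mu) u v) \<le> R c))"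

definition MSNE :: "('s::finite \<Rightarrow> 'c) \<Rightarrow> ('s \<Rightarrow> 'a::finite set) \<Rightarrow> ('s \<Rightarrow> 'a \<Rightarrow> 's \<Rightarrow> real) \<Rightarrow> ('c \<Rightarrow> real) \<Rightarrow>
    ('c \<Rightarrow> real) \<Rightarrow> ('s \<Rightarrow> 'a \<Rightarrow> real ^ ('s \<times> 'a) \<Rightarrow> real) \<Rightarrow> ('s \<Rightarrow> ('s \<Rightarrow> 'a) \<Rightarrow> real) \<Rightarrow> bool" where
  "MSNE cls A phi lam m r mu \<longleftrightarrow> mu \<in> Xset cls A m \<and>
     (\<forall>c. \<forall>u\<in>UD cls A c.
        (polmass cls c mu u > 0 \<longrightarrow>
           (\<forall>v\<in>UD cls A c. Fpay cls A phi lam r c mu u \<ge> Fpay cls A phi lam r c mu v)) \<and>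
        (\<forall>s\<in>St cls c. mu s u = eta cls phi lam c u s * polmass cls c mu u))"

definition fd :: "('s \<Rightarrow> 'c) \<Rightarrow> ('s \<Rightarrow> 'a set) \<Rightarrow> ('s \<Rightarrow> 'a \<Rightarrow> 's \<Rightarrow> real) \<Rightarrow> ('c \<Rightarrow> real) \<Rightarrow>
    'c \<Rightarrow> 's \<Rightarrow> ('s \<Rightarrow> 'a) \<Rightarrow> ('s \<Rightarrow> ('s \<Rightarrow> 'a) \<Rightarrow> real) \<Rightarrow> real" where
  "fd cls A phi lam c s u mu =
     lam c * (\<Sum>s'\<in>St cls c. \<Sum>a'\<in>A s'. phi s' a' s * upol u a' s' * mu s' u) - lam c * mu s u"

definition fr :: "('s::finite \<Rightarrow> 'c) \<Rightarrow> ('s \<Rightarrow> 'a::finite set) \<Rightarrow> ('s \<Rightarrow> 'a \<Rightarrow> 's \<Rightarrow> real) \<Rightarrow> ('c \<Rightarrow> real) \<Rightarrow>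
    ('s \<Rightarrow> 'a \<Rightarrow> real ^ ('s \<times> 'a) \<Rightarrow> real) \<Rightarrow>
    ('c \<Rightarrow> (('s \<Rightarrow> 'a) \<Rightarrow> real) \<Rightarrow> (('s \<Rightarrow> 'a) \<Rightarrow> real) \<Rightarrow> ('s \<Rightarrow> 'a) \<Rightarrow> ('s \<Rightarrow> 'a) \<Rightarrow> real) \<Rightarrow>
    'c \<Rightarrow> 's \<Rightarrow> ('s \<Rightarrow> 'a) \<Rightarrow> ('s \<Rightarrow> ('s \<Rightarrow> 'a) \<Rightarrow> real) \<Rightarrow> real" where
  "fr cls A phi lam r rho c s u mu =
     (let F = Fpay cls A phi lam r c mu; sig = polmass cls c mu in
       (\<Sum>u'\<in>UD cls A c. mu s u' * rho c F sig u' u) - mu s u * (\<Sum>u'\<in>UD cls A c. rho c F sig u u'))"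

end

theory Submission
  imports Defs
begin

lemma tau_vanish:
  fixes tau :: "('b \<Rightarrow> real) \<Rightarrow> 'b \<Rightarrow> real"
  assumes fin: "finite U"
    and lip: "\<forall>G G'. \<forall>v\<in>U. \<bar>tau G v - tau G' v\<bar> \<le> L * (\<Sum>w\<in>U. \<bar>G w - G' w\<bar>)"
    and nn: "\<forall>G. \<forall>v\<in>U. tau G v \<ge> 0"
    and acute: "\<forall>G. (\<exists>w\<in>U. G w > 0) \<longrightarrow> (\<Sum>w\<in>U. tau G w * G w) > 0"
    and neg: "\<forall>w\<in>U. G w \<le> 0" and i: "i \<in> U" "G i = 0" and j: "j \<in> U" "j \<noteq> i"
  shows "tau G j = 0"
proof -
  define Ge where "Ge = (\<lambda>e::real. G(i := e^2, j := G j - e))"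
  have dist: "(\<Sum>w\<in>U. \<bar>Ge e w - G w\<bar>) = e^2 + \<bar>e\<bar>" for e
  proof -
    have "(\<Sum>w\<in>U. \<bar>Ge e w - G w\<bar>) = (\<Sum>w\<in>U. (if w = i then e^2 else 0) + (if w = j then \<bar>e\<bar> else 0))"
      by (rule sum.cong) (auto simp: Ge_def i j)
    also have "\<dots> = e^2 + \<bar>e\<bar>" using fin i j by (simp add: sum.distrib)
    finally show ?thesis .
  qed
  have lim: "((\<lambda>e. tau (Ge e) w) \<longlongrightarrow> tau G w) (at_right 0)" if w: "w \<in> U" for w
  proof -
    have "((\<lambda>e. tau (Ge e) w - tau G w) \<longlongrightarrow> 0) (at_right 0)"
    proof (rule Lim_null_comparison)
      show "\<forall>\<^sub>F e in at_right 0. norm (tau (Ge e) w - tau G w) \<le> L * (e^2 + \<bar>e\<bar>)"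
        using lip w dist by (intro always_eventually allI) (metis real_norm_def)
      show "((\<lambda>e. L * (e^2 + \<bar>e\<bar>)) \<longlongrightarrow> 0) (at_right (0::real))"
        by (auto intro!: tendsto_eq_intros)
    qed
    then show ?thesis by (simp add: LIM_zero_iff)
  qed
  have ev: "\<forall>\<^sub>F e in at_right 0. tau (Ge e) j \<le> e * tau (Ge e) i"
  proof -
    have "tau (Ge e) j \<le> e * tau (Ge e) i" if e: "e > 0" for e
    proof -
      have pos: "\<exists>w\<in>U. Ge e w > 0" using i e j by (auto simp: Ge_def intro!: bexI[of _ i])
      have "(\<Sum>w\<in>U. tau (Ge e) w * Ge e w) =
          tau (Ge e) i * e^2 + tau (Ge e) j * (G j - e) + (\<Sum>w\<in>U - {i} - {j}. tau (Ge e) w * G w)"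
      proof -
        have "(\<Sum>w\<in>U. tau (Ge e) w * Ge e w) = tau (Ge e) i * Ge e i + (\<Sum>w\<in>U - {i}. tau (Ge e) w * Ge e w)"
          using fin i by (simp add: sum.remove)
        also have "(\<Sum>w\<in>U - {i}. tau (Ge e) w * Ge e w) = tau (Ge e) j * Ge e j + (\<Sum>w\<in>U - {i} - {j}. tau (Ge e) w * Ge e w)"
          using fin j by (simp add: sum.remove)
        also have "(\<Sum>w\<in>U - {i} - {j}. tau (Ge e) w * Ge e w) = (\<Sum>w\<in>U - {i} - {j}. tau (Ge e) w * G w)"
          by (rule sum.cong) (auto simp: Ge_def)
        moreover have "Ge e i = e^2" "Ge e j = G j - e" using j by (auto simp: Ge_def)
        ultimately show ?thesis by simp
      qed
      moreover have "(\<Sum>w\<in>U - {i} - {j}. tau (Ge e) w * G w) \<le> 0"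
        using neg nn by (intro sum_nonpos) (simp add: mult_nonneg_nonpos)
      moreover have "tau (Ge e) j * (G j - e) \<le> tau (Ge e) j * (- e)"
        using neg j nn by (intro mult_left_mono) auto
      moreover have "(\<Sum>w\<in>U. tau (Ge e) w * Ge e w) > 0" using acute pos by blast
      ultimately have "0 < tau (Ge e) i * e^2 - tau (Ge e) j * e"
        by linarith
      then have "0 < e * (e * tau (Ge e) i - tau (Ge e) j)" by (simp add: power2_eq_square algebra_simps)
      then show ?thesis using e by (simp add: zero_less_mult_iff)
    qed
    then show ?thesis using eventually_at_right_less[of 0] by (rule eventually_mono[rotated]) simp
  qed
  have "tau G j \<le> 0 * tau G i"
    by (rule tendsto_le[OF trivial_limit_at_right_real _ lim[OF j(1)] ev])
       (intro tendsto_intros lim i)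
  then show ?thesis using nn j by (simp add: order_antisym)
qed


lemma fd_zero:
  assumes model: "model_ok cls A phi lam m"
    and A2: "A2 cls A phi lam"
    and ne: "MSNE cls A phi lam m r mu"
    and s: "s \<in> St cls c" and u: "u \<in> UD cls A c"
  shows "fd cls A phi lam c s u mu = 0"
proof -
  let ?e = "eta cls phi lam c u"
  let ?p = "polmass cls c mu u"
  have "\<exists>!e. stationary cls phi lam c u e" using A2 u by (simp add: A2_def)
  then have st: "stationary cls phi lam c u ?e" unfolding eta_def by (rule theI')
  have finS: "finite (St cls c)" by simp
  have mu_eq: "\<forall>s\<in>St cls c. mu s u = ?e s * ?p" using ne u by (simp add: MSNE_def)
  have inner: "(\<Sum>a'\<in>A s'. phi s' a' s * upol u a' s' * mu s' u) = phi s' (u s') s * (?e s' * ?p)"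
    if s': "s' \<in> St cls c" for s'
  proof -
    have fA: "finite (A s')" using model by (simp add: model_ok_def)
    have uA: "u s' \<in> A s'" using u s' by (auto simp: UD_def PiE_def Pi_def)
    have "(\<Sum>a'\<in>A s'. phi s' a' s * upol u a' s' * mu s' u) =
        (\<Sum>a'\<in>A s'. if a' = u s' then phi s' (u s') s * mu s' u else 0)"
      by (rule sum.cong) (auto simp: upol_def)
    also have "\<dots> = phi s' (u s') s * mu s' u" using fA uA by (simp add: sum.delta')
    finally show ?thesis using mu_eq s' by simp
  qed
  have "(\<Sum>s'\<in>St cls c. gen phi lam c u s s' * ?e s') = 0" using st s by (simp add: stationary_def)
  moreover have "(\<Sum>s'\<in>St cls c. gen phi lam c u s s' * ?e s') =
      lam c * (\<Sum>s'\<in>St cls c. phi s' (u s') s * ?e s') - lam c * ?e s"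
  proof -
    have "(\<Sum>s'\<in>St cls c. gen phi lam c u s s' * ?e s') =
       (\<Sum>s'\<in>St cls c. lam c * (phi s' (u s') s * ?e s') - lam c * (if s' = s then ?e s else 0))"
      by (rule sum.cong) (auto simp: gen_def algebra_simps)
    also have "\<dots> = lam c * (\<Sum>s'\<in>St cls c. phi s' (u s') s * ?e s') - lam c * ?e s"
      using s finS by (simp add: sum_subtractf sum_distrib_left[symmetric] sum.delta')
    finally show ?thesis .
  qed
  ultimately have z: "lam c * (\<Sum>s'\<in>St cls c. phi s' (u s') s * ?e s') - lam c * ?e s = 0" by simp
  have "fd cls A phi lam c s u mu = lam c * (\<Sum>s'\<in>St cls c. phi s' (u s') s * (?e s' * ?p)) - lam c * (?e s * ?p)"
    unfolding fd_def using inner mu_eq s by simp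
  also have "\<dots> = ?p * (lam c * (\<Sum>s'\<in>St cls c. phi s' (u s') s * ?e s') - lam c * ?e s)"
    by (simp add: sum_distrib_left sum_distrib_right algebra_simps)
  finally show ?thesis using z by simp
qed


lemma fr_zero:
  fixes cls :: "'s::finite \<Rightarrow> 'c::finite"
    and A :: "'s \<Rightarrow> 'a::finite set"
  assumes model: "model_ok cls A phi lam m"
    and prot: "imitative_via_comparison (UD cls A c) (XU cls A m c) (m c) (rho c)
                      \<or> excess_payoff (UD cls A c) (XU cls A m c) (m c) (rho c)
                      \<or> pairwise_comparison (UD cls A c) (XU cls A m c) (rho c)"
    and ne: "MSNE cls A phi lam m r mu"
    and s: "s \<in> St cls c" and u: "u \<in> UD cls A c"
  shows "fr cls A phi lam r rho c s u mu = 0"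
proof -
  define U where "U = UD cls A c"
  define F where "F = Fpay cls A phi lam r c mu"
  define sig where "sig = polmass cls c mu"
  have finU: "finite U" unfolding U_def by (rule finite_subset[of _ UNIV]) auto
  have mpos: "m c > 0" using model by (simp add: model_ok_def)
  have muX: "mu \<in> Xset cls A m" using ne by (simp add: MSNE_def)
  have mu_nn: "\<And>s' v. s' \<in> St cls c \<Longrightarrow> v \<in> U \<Longrightarrow> mu s' v \<ge> 0"
    using muX by (auto simp: Xset_def U_def)
  have sig_nn: "\<And>v. v \<in> U \<Longrightarrow> sig v \<ge> 0"
    unfolding sig_def polmass_def using mu_nn by (simp add: sum_nonneg)
  have sig_sum: "(\<Sum>v\<in>U. sig v) = m c"
    using muX unfolding sig_def polmass_def U_def Xset_def by (simp add: sum.swap[of _ "St cls c"])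
  have sigXU: "sig \<in> XU cls A m c" using sig_nn sig_sum by (simp add: XU_def U_def)
  have mu_eq: "\<And>v s'. v \<in> U \<Longrightarrow> s' \<in> St cls c \<Longrightarrow> mu s' v = eta cls phi lam c v s' * sig v"
    using ne by (simp add: MSNE_def U_def sig_def)
  have supp: "sig v > 0" if "v \<in> U" "mu s v \<noteq> 0" for v
    using mu_eq[OF that(1) s] that sig_nn[OF that(1)] by force
  have opt: "F v \<ge> F w" if "v \<in> U" "w \<in> U" "sig v > 0" for v w
    using ne that by (simp add: MSNE_def U_def F_def sig_def)
  have fr_eq: "fr cls A phi lam r rho c s u mu =
     (\<Sum>u'\<in>U. mu s u' * rho c F sig u' u) - mu s u * (\<Sum>u'\<in>U. rho c F sig u u')"
    by (simp add: fr_def U_def F_def sig_def Let_def)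
  have uU: "u \<in> U" using u by (simp add: U_def)
  show ?thesis
  proof (cases "excess_payoff U (XU cls A m c) (m c) (rho c)")
    case True
    then obtain tau :: "(('s \<Rightarrow> 'a) \<Rightarrow> real) \<Rightarrow> ('s \<Rightarrow> 'a) \<Rightarrow> real" and L where
      lip: "\<forall>G G'. \<forall>v\<in>U. \<bar>tau G v - tau G' v\<bar> \<le> L * (\<Sum>w\<in>U. \<bar>G w - G' w\<bar>)" and
      nn: "\<forall>G. \<forall>v\<in>U. tau G v \<ge> 0" and
      acute: "\<forall>G. (\<exists>w\<in>U. G w > 0) \<longrightarrow> (\<Sum>w\<in>U. tau G w * G w) > 0" and
      rh: "\<forall>F sig. sig \<in> XU cls A m c \<longrightarrow> (\<forall>u\<in>U. \<forall>v\<in>U.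
        rho c F sig u v = tau (\<lambda>w. F w - (\<Sum>w'\<in>U. F w' * sig w') / m c) v)"
      unfolding excess_payoff_def by blast
    define G where "G = (\<lambda>w. F w - (\<Sum>w'\<in>U. F w' * sig w') / m c)"
    have rhoG: "\<And>u' v. u' \<in> U \<Longrightarrow> v \<in> U \<Longrightarrow> rho c F sig u' v = tau G v"
      using rh sigXU by (simp add: G_def)
    have key: "mu s u' * tau G v = 0" if "u' \<in> U" "v \<in> U" "u' \<noteq> v" for u' v
    proof (cases "mu s u' = 0")
      case False
      then have sp: "sig u' > 0" using supp that by blast
      have "(\<Sum>w'\<in>U. F w' * sig w') = (\<Sum>w'\<in>U. F u' * sig w')"
      proof (rule sum.cong)
        fix w' assume w': "w' \<in> U"
        show "F w' * sig w' = F u' * sig w'"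
        proof (cases "sig w' > 0")
          case True
          then have "F w' = F u'" using opt[OF w' that(1) True] opt[OF that(1) w' sp] by simp
          then show ?thesis by simp
        next
          case False
          then have "sig w' = 0" using sig_nn[OF w'] by simp
          then show ?thesis by simp
        qed
      qed simp
      also have "\<dots> = F u' * m c" using sig_sum by (simp add: sum_distrib_left[symmetric])
      finally have "G = (\<lambda>w. F w - F u')" using mpos by (simp add: G_def)
      then have "tau G v = 0"
        using tau_vanish[OF finU lip nn acute, of G u' v] opt[OF that(1) _ sp] that by auto
      then show ?thesis by simp
    qed simp
    have "fr cls A phi lam r rho c s u mu = (\<Sum>u'\<in>U. mu s u' * tau G u - mu s u * tau G u')"
      using fr_eq rhoG uU by (simp add: sum_subtractf sum_distrib_left)
    also have "\<dots> = 0"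
      by (rule sum.neutral) (metis key uU diff_self)
    finally show ?thesis .
  next
    case False
    have zero: "rho c F sig u' v = 0" if "u' \<in> U" "v \<in> U" "sig u' > 0" for u' v
    proof -
      have le: "max 0 (F v - F u') = 0" using opt[OF that(1,2,3)] by simp
      show ?thesis
      proof (cases "pairwise_comparison U (XU cls A m c) (rho c)")
        case True
        then obtain tau where
          t: "\<forall>G. \<forall>u\<in>U. \<forall>v\<in>U. tau G u v \<ge> 0 \<and> sgn (tau G u v) = sgn (max 0 (G v - G u))" and
          rh: "\<forall>F sig. sig \<in> XU cls A m c \<longrightarrow> (\<forall>u\<in>U. \<forall>v\<in>U. rho c F sig u v = tau F u v)"
          unfolding pairwise_comparison_def by blast
        have "sgn (tau F u' v) = 0" using t that le by simp
        then show ?thesis using rh sigXU that by (simp add: sgn_eq_0_iff)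
      next
        case False
        then have "imitative_via_comparison U (XU cls A m c) (m c) (rho c)"
          using prot \<open>\<not> excess_payoff U (XU cls A m c) (m c) (rho c)\<close> by (simp add: U_def)
        then obtain rr where
          rh: "\<forall>F sig. sig \<in> XU cls A m c \<longrightarrow> (\<forall>u\<in>U. \<forall>v\<in>U.
            rr F sig u v \<ge> 0 \<and> rho c F sig u v = rr F sig u v * sig v / m c \<and>
            sgn (rr F sig u v) = sgn (max 0 (F v - F u)))"
          unfolding imitative_via_comparison_def by blast
        have "sgn (rr F sig u' v) = 0" using rh sigXU that le by simp
        then have "rr F sig u' v = 0" by (simp add: sgn_eq_0_iff)
        then show ?thesis using rh sigXU that by simp
      qed
    qed
    have z2: "mu s u' * rho c F sig u' v = 0" if "u' \<in> U" "v \<in> U" for u' v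
      using zero[OF that] supp[OF that(1)] by fastforce
    have "(\<Sum>u'\<in>U. mu s u' * rho c F sig u' u) = 0" using z2 uU by (intro sum.neutral) blast
    moreover have "mu s u * (\<Sum>u'\<in>U. rho c F sig u u') = 0"
      using z2 uU unfolding sum_distrib_left by (intro sum.neutral) blast
    ultimately show ?thesis using fr_eq by simp
  qed
qed

theorem theorem4:
  fixes cls :: "'s::finite \<Rightarrow> 'c::finite"
    and A :: "'s \<Rightarrow> 'a::finite set"
    and phi :: "'s \<Rightarrow> 'a \<Rightarrow> 's \<Rightarrow> real"
    and lam :: "'c \<Rightarrow> real"
    and m :: "'c \<Rightarrow> real"
    and r :: "'s \<Rightarrow> 'a \<Rightarrow> real ^ ('s \<times> 'a) \<Rightarrow> real"
    and rho :: "'c \<Rightarrow> (('s \<Rightarrow> 'a) \<Rightarrow> real) \<Rightarrow> (('s \<Rightarrow> 'a) \<Rightarrow> real) \<Rightarrow> ('s \<Rightarrow> 'a) \<Rightarrow> ('s \<Rightarrow> 'a) \<Rightarrow> real"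
    and R :: "'c \<Rightarrow> real"
    and mu :: "'s \<Rightarrow> ('s \<Rightarrow> 'a) \<Rightarrow> real"
  assumes model: "model_ok cls A phi lam m"
    and A1: "A1 cls A m r"
    and A2: "A2 cls A phi lam"
    and A3: "A3 cls A phi lam m r rho R"
    and protocols: "\<forall>c. imitative_via_comparison (UD cls A c) (XU cls A m c) (m c) (rho c)
                      \<or> excess_payoff (UD cls A c) (XU cls A m c) (m c) (rho c)
                      \<or> pairwise_comparison (UD cls A c) (XU cls A m c) (rho c)"
    and ne: "MSNE cls A phi lam m r mu"
  shows "\<forall>c. \<forall>s\<in>St cls c. \<forall>u\<in>UD cls A c.
           fd cls A phi lam c s u mu + fr cls A phi lam r rho c s u mu = 0"
proof (intro allI ballI)
  fix c s u assume s: "s \<in> St cls c" and u: "u \<in> UD cls A c"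
  show "fd cls A phi lam c s u mu + fr cls A phi lam r rho c s u mu = 0"
    using fd_zero[OF model A2 ne s u] fr_zero[OF model _ ne s u] protocols by simp
qed

end
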